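(* Let $V$ be a nonempty finite set and let $B \subseteq \mathbb{Z}^V$ be a nonempty set satisfying ($\Delta$-EXC): for any $p, q \in B$ and any $u \in \operatorname{supp}(q-p)$, there exists $\alpha \in \Phi_B(p,q)$ with $u \in \operatorname{supp}(\alpha)$. Let $q, r \in B$ with $q \neq r$. Then there exist $k, l \ge 1$ and vectors $\alpha_1, \dots, \alpha_k \in \Phi_B(q,r)$ and $\beta_1, \dots, \beta_l \in \Phi_B(r,q)$ (not necessarily distinct) such that $\sum_{i=1}^k \alpha_i + \sum_{j=1}^l \beta_j = \mathbf{0}$.
   Context: For $t \in \mathbb{R}^V$, $\operatorname{supp}(t) = \{u \in V : t(u) \neq 0\}$; $\|p\|_1 = \sum_{u \in V}|p(u)|$; $\chi_u$ is the $u$-th unit vector. Let $\Phi = \{\pm \chi_u : u \in V\} \cup \{\pm\chi_u \pm \chi_v : u, v \in V, u \ne v\}$. For $p, q \in \mathbb{Z}^V$, $\Phi(p,q) = \{\alpha \in \Phi : \|q - (p+\alpha)\|_1 = \|q-p\|_1 - \|\alpha\|_1\}$, and for $B \subseteq \mathbb{Z}^V$ and $p,q \in B$, $\Phi_B(p,q) = \{\alpha \in \Phi(p,q) : p + \alpha \in B\}$. *)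

theory Defs
  imports Main "HOL-Library.Function_Algebras"
begin

text \<open>Vectors in Z^V are functions 'v => int, with V = UNIV of a finite type 'v.\<close>

definition supp :: "('v \<Rightarrow> int) \<Rightarrow> 'v set" where
  "supp t = {u. t u \<noteq> 0}"

definition norm1 :: "('v::finite \<Rightarrow> int) \<Rightarrow> int" where
  "norm1 p = (\<Sum>u\<in>UNIV. \<bar>p u\<bar>)"

definition chi :: "'v \<Rightarrow> ('v \<Rightarrow> int)" where
  "chi u = (\<lambda>v. if v = u then 1 else 0)"

definition Phi :: "('v \<Rightarrow> int) set" where
  "Phi = {chi u | u. True} \<union> {- chi u | u. True}
        \<union> {(\<lambda>w. s * chi u w + t * chi v w) | u v s t. u \<noteq> v \<and> s \<in> {1, -1::int} \<and> t \<in> {1, -1::int}}"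

definition PhiPQ :: "('v::finite \<Rightarrow> int) \<Rightarrow> ('v \<Rightarrow> int) \<Rightarrow> ('v \<Rightarrow> int) set" where
  "PhiPQ p q = {\<alpha> \<in> Phi. norm1 (q - (p + \<alpha>)) = norm1 (q - p) - norm1 \<alpha>}"

definition PhiB :: "('v::finite \<Rightarrow> int) set \<Rightarrow> ('v \<Rightarrow> int) \<Rightarrow> ('v \<Rightarrow> int) \<Rightarrow> ('v \<Rightarrow> int) set" where
  "PhiB B p q = {\<alpha> \<in> PhiPQ p q. p + \<alpha> \<in> B}"

definition delta_exc :: "('v::finite \<Rightarrow> int) set \<Rightarrow> bool" where
  "delta_exc B \<longleftrightarrow> (\<forall>p\<in>B. \<forall>q\<in>B. \<forall>u\<in>supp (q - p). \<exists>\<alpha>\<in>PhiB B p q. u \<in> supp \<alpha>)"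

end

theory Submission
  imports Defs
begin

lemma phi_shape:
  assumes "(\<alpha>::'v \<Rightarrow> int) \<in> Phi"
  shows "(\<exists>x y. supp \<alpha> \<subseteq> {x,y}) \<and> (\<forall>v. \<alpha> v \<in> {-1,0,1})"
proof -
  from assms consider (a) u where "\<alpha> = chi u" | (b) u where "\<alpha> = - chi u"
    | (c) u v s t where "\<alpha> = (\<lambda>w. s * chi u w + t * chi v w)" "u \<noteq> v" "s \<in> {1,-1}" "t \<in> {1,-1}"
    unfolding Phi_def by blast
  then show ?thesis
  proof cases
    case a
    hence "supp \<alpha> \<subseteq> {u,u}" by (auto simp: supp_def chi_def)
    moreover have "\<forall>v. \<alpha> v \<in> {-1,0,1}" using a by (auto simp: chi_def)
    ultimately show ?thesis by blast
  next
    case b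
    hence "supp \<alpha> \<subseteq> {u,u}" by (auto simp: supp_def chi_def)
    moreover have "\<forall>v. \<alpha> v \<in> {-1,0,1}" using b by (auto simp: chi_def)
    ultimately show ?thesis by blast
  next
    case c
    hence "supp \<alpha> \<subseteq> {u,v}" by (auto simp: supp_def chi_def)
    moreover have "\<forall>v. \<alpha> v \<in> {-1,0,1}" using c by (auto simp: chi_def)
    ultimately show ?thesis by blast
  qed
qed

lemma conformal:
  fixes p q \<alpha> :: "'v::finite \<Rightarrow> int"
  assumes "\<alpha> \<in> PhiPQ p q" and "\<alpha> v \<noteq> 0"
  shows "\<alpha> v = sgn ((q - p) v)"
proof -
  define d where "d = q - p"
  have a: "\<alpha> \<in> Phi" and eq: "norm1 (q - (p + \<alpha>)) = norm1 (q - p) - norm1 \<alpha>"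
    using assms(1) unfolding PhiPQ_def by auto
  have "(\<Sum>u\<in>UNIV. \<bar>d u - \<alpha> u\<bar>) = (\<Sum>u\<in>UNIV. \<bar>d u\<bar>) - (\<Sum>u\<in>UNIV. \<bar>\<alpha> u\<bar>)"
    using eq unfolding norm1_def d_def by (simp add: algebra_simps)
  hence "(\<Sum>u\<in>UNIV. \<bar>d u - \<alpha> u\<bar> - (\<bar>d u\<bar> - \<bar>\<alpha> u\<bar>)) = 0"
    by (simp add: sum_subtractf)
  hence "\<forall>u\<in>UNIV. \<bar>d u - \<alpha> u\<bar> - (\<bar>d u\<bar> - \<bar>\<alpha> u\<bar>) = 0"
    by (subst (asm) sum_nonneg_eq_0_iff) auto
  hence h: "\<bar>d v - \<alpha> v\<bar> = \<bar>d v\<bar> - \<bar>\<alpha> v\<bar>" by auto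
  have "\<alpha> v \<in> {-1,1}" using phi_shape[OF a] assms(2) by auto
  hence "\<alpha> v = 1 \<or> \<alpha> v = -1" by blast
  then show ?thesis
  proof
    assume a1: "\<alpha> v = 1"
    hence "d v > 0" using h by arith
    hence "sgn (d v) = 1" by simp
    thus ?thesis using a1 unfolding d_def by simp
  next
    assume a1: "\<alpha> v = -1"
    hence "d v < 0" using h by arith
    hence "sgn (d v) = -1" by simp
    thus ?thesis using a1 unfolding d_def by simp
  qed
qed

definition other :: "('v \<Rightarrow> int) \<Rightarrow> 'v \<Rightarrow> 'v" where
  "other e u = (if \<exists>v. v \<noteq> u \<and> e v \<noteq> 0 then SOME v. v \<noteq> u \<and> e v \<noteq> 0 else u)"

lemma other_supp:
  fixes e :: "'v \<Rightarrow> int"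
  assumes "e \<in> Phi" "u \<in> supp e"
  shows "other e u \<in> supp e" "supp e = {u, other e u}"
proof -
  show o: "other e u \<in> supp e"
  proof (cases "\<exists>v. v \<noteq> u \<and> e v \<noteq> 0")
    case True
    hence "(SOME v. v \<noteq> u \<and> e v \<noteq> 0) \<noteq> u \<and> e (SOME v. v \<noteq> u \<and> e v \<noteq> 0) \<noteq> 0"
      by (rule someI_ex)
    then show ?thesis using True unfolding other_def supp_def by simp
  next
    case False
    hence "other e u = u" unfolding other_def by meson
    then show ?thesis using assms(2) by simp
  qed
  obtain x y where xy: "supp e \<subseteq> {x,y}" using phi_shape[OF assms(1)] by blast
  show "supp e = {u, other e u}"
  proof
    show "{u, other e u} \<subseteq> supp e" using o assms(2) by auto
    show "supp e \<subseteq> {u, other e u}"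
    proof
      fix v assume v: "v \<in> supp e"
      show "v \<in> {u, other e u}"
      proof (cases "v = u")
        case False
        hence ex: "\<exists>v. v \<noteq> u \<and> e v \<noteq> 0" using v unfolding supp_def by auto
        hence "(SOME v. v \<noteq> u \<and> e v \<noteq> 0) \<noteq> u \<and> e (SOME v. v \<noteq> u \<and> e v \<noteq> 0) \<noteq> 0"
          by (rule someI_ex)
        hence w: "other e u \<noteq> u" "e (other e u) \<noteq> 0"
          using ex unfolding other_def by simp_all
        have "other e u \<in> supp e" using w unfolding supp_def by auto
        then show ?thesis using xy v assms(2) False w(1) by auto
      qed simp
    qed
  qed
qed

lemma stab:
  assumes "finite X" "X \<noteq> {}" "T ` X \<subseteq> X"
  shows "\<exists>Z. Z \<subseteq> X \<and> Z \<noteq> {} \<and> T ` Z = Z"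
  using assms
proof (induction "card X" arbitrary: X rule: less_induct)
  case less
  note IH = less.hyps and fin = less.prems(1) and ne = less.prems(2) and sub = less.prems(3)
  show ?case
  proof (cases "T ` X = X")
    case True
    have "X \<subseteq> X \<and> X \<noteq> {} \<and> T ` X = X" using True ne by blast
    then show ?thesis by blast
  next
    case False
    hence ps: "T ` X \<subset> X" using sub by blast
    hence lt: "card (T ` X) < card X" using fin by (rule psubset_card_mono[rotated])
    have f2: "finite (T ` X)" using fin by blast
    have n2: "T ` X \<noteq> {}" using ne by blast
    have s2: "T ` (T ` X) \<subseteq> T ` X" using sub by blast
    obtain Z where Z: "Z \<subseteq> T ` X" "Z \<noteq> {}" "T ` Z = Z" using IH[OF lt f2 n2 s2] by blast
    have "Z \<subseteq> X" using Z(1) ps by blast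
    then show ?thesis using Z(2,3) by blast
  qed
qed

lemma split_sum:
  "sum_list (concat (map con (filter P xs))) + sum_list (concat (map con (filter (Not \<circ> P) xs)))
   = sum_list (map (sum_list \<circ> con) xs)" for con :: "'a \<Rightarrow> ('b::ab_group_add) list"
  by (induction xs) (auto simp: algebra_simps)

lemma edge_form:
  fixes e p q :: "'v::finite \<Rightarrow> int"
  assumes "e \<in> PhiB B p q" "u \<in> supp e"
  shows "e = (\<lambda>v. if v = u \<or> v = other e u then sgn ((q - p) v) else 0)"
proof
  fix v
  have ph: "e \<in> Phi" and pq: "e \<in> PhiPQ p q" using assms(1) unfolding PhiB_def PhiPQ_def by auto
  have s: "supp e = {u, other e u}" using other_supp[OF ph assms(2)] by simp
  show "e v = (if v = u \<or> v = other e u then sgn ((q - p) v) else 0)"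
  proof (cases "e v = 0")
    case True
    have "v \<notin> supp e" using True unfolding supp_def by simp
    hence "\<not> (v = u \<or> v = other e u)" using s by blast
    then show ?thesis using True by (simp only: if_False)
  next
    case False
    have "v \<in> supp e" using False unfolding supp_def by simp
    hence "v = u \<or> v = other e u" using s by blast
    then show ?thesis using conformal[OF pq False] by (simp only: if_True)
  qed
qed

definition unitv :: "('v \<Rightarrow> int) \<Rightarrow> bool \<Rightarrow> 'v \<Rightarrow> ('v \<Rightarrow> int)" where
  "unitv d c u = (\<lambda>v. if v = u then (if c then sgn (d u) else - sgn (d u)) else 0)"

lemma concat_nonempty: "xs \<in> set xss \<Longrightarrow> xs \<noteq> [] \<Longrightarrow> concat xss \<noteq> []"
  by auto

theorem mainTheorem2:
  fixes B :: "('v::finite \<Rightarrow> int) set" and q r :: "'v \<Rightarrow> int"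
  assumes "B \<noteq> {}" and "delta_exc B"
    and "q \<in> B" and "r \<in> B" and "q \<noteq> r"
  shows "\<exists>as bs. as \<noteq> [] \<and> bs \<noteq> [] \<and> set as \<subseteq> PhiB B q r \<and> set bs \<subseteq> PhiB B r q
           \<and> sum_list as + sum_list bs = 0"
proof -
  define d where "d = r - q"
  define P where "P c = (if c then PhiB B q r else PhiB B r q)" for c
  have suppneg: "supp (q - r) = supp d" unfolding d_def supp_def by auto
  have ex: "\<exists>e. e \<in> P c \<and> u \<in> supp e" if "u \<in> supp d" for c u
  proof (cases c)
    case True
    have "\<exists>\<alpha>\<in>PhiB B q r. u \<in> supp \<alpha>" using assms(2,3,4) that unfolding delta_exc_def d_def by blast
    then show ?thesis using True unfolding P_def by auto
  next
    case False
    have "\<exists>\<alpha>\<in>PhiB B r q. u \<in> supp \<alpha>" using assms(2,3,4) that suppneg unfolding delta_exc_def by blast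
    then show ?thesis using False unfolding P_def by auto
  qed
  define f where "f c u = (SOME e. e \<in> P c \<and> u \<in> supp e)" for c u
  have f: "f c u \<in> P c \<and> u \<in> supp (f c u)" if "u \<in> supp d" for c u
    unfolding f_def using someI_ex[OF ex[OF that]] .
  have form0: "e = unitv d c u + (if w = u then 0 else unitv d c w) \<and> w \<in> supp d"
    if "u \<in> supp d" "e = f c u" "w = other e u" for c u e w
  proof -
    have fe: "e \<in> P c" "u \<in> supp e" using f[OF that(1), of c] unfolding that(2)[symmetric] by auto
    have ee: "e = (\<lambda>v. if v = u \<or> v = w then (if c then sgn (d v) else - sgn (d v)) else 0)"
    proof (cases c)
      case True
      have e1: "e \<in> PhiB B q r" using fe(1) True unfolding P_def by simp
      have "e = (\<lambda>v. if v = u \<or> v = other e u then sgn ((r - q) v) else 0)"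
        by (rule edge_form[OF e1 fe(2)])
      hence "e = (\<lambda>v. if v = u \<or> v = w then sgn ((r - q) v) else 0)"
        unfolding that(3)[symmetric] .
      then show ?thesis unfolding d_def by (simp only: True if_True)
    next
      case False
      have sg: "sgn ((q - r) v) = - sgn (d v)" for v unfolding d_def by (auto simp: sgn_if)
      have e1: "e \<in> PhiB B r q" using fe(1) False unfolding P_def by simp
      have "e = (\<lambda>v. if v = u \<or> v = other e u then sgn ((q - r) v) else 0)"
        by (rule edge_form[OF e1 fe(2)])
      hence "e = (\<lambda>v. if v = u \<or> v = w then sgn ((q - r) v) else 0)"
        unfolding that(3)[symmetric] .
      then show ?thesis by (simp only: False if_False sg)
    qed
    have "e = unitv d c u + (if w = u then 0 else unitv d c w)"
      by (subst ee, rule ext) (auto simp: unitv_def)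
    moreover have "w \<in> supp d"
    proof -
      have "e \<in> Phi" using fe(1) unfolding P_def PhiB_def PhiPQ_def by (auto split: if_splits)
      hence "e w \<noteq> 0" using other_supp(1)[of e u] fe(2) that(3) unfolding supp_def by auto
      then show ?thesis using ee unfolding supp_def by (auto split: if_splits)
    qed
    ultimately show ?thesis by blast
  qed
  have form: "f c u = unitv d c u + (if other (f c u) u = u then 0 else unitv d c (other (f c u) u))
       \<and> other (f c u) u \<in> supp d" if "u \<in> supp d" for c u
    using form0[OF that refl refl] .
  define T where "T s = (other (f (snd s) (fst s)) (fst s), \<not> snd s)" for s
  define X where "X = supp d \<times> (UNIV :: bool set)"
  have "supp d \<noteq> {}" using assms(5) unfolding d_def supp_def by (auto simp: fun_eq_iff) (metis)
  hence Xne: "X \<noteq> {}" unfolding X_def by auto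
  have form2: "other (f c u) u \<in> supp d" if "u \<in> supp d" for c u using form[OF that] by blast
  have TX: "T ` X \<subseteq> X" using form2 unfolding X_def T_def by auto
  obtain Z where Z: "Z \<subseteq> X" "Z \<noteq> {}" "T ` Z = Z" using stab[OF _ Xne TX] by auto
  have finZ: "finite Z" by (rule finite_subset[OF Z(1)]) simp
  have injZ: "inj_on T Z" using finZ Z(3) by (simp add: eq_card_imp_inj_on)
  define con where "con s = (if other (f (snd s) (fst s)) (fst s) = fst s
      then [f (snd s) (fst s), f (snd s) (fst s)] else [f (snd s) (fst s)])" for s
  define D where "D s = unitv d (snd s) (fst s)" for s
  define g where "g s = unitv d (\<not> snd s) (fst s)" for s
  have vec: "sum_list (con s) = D s + g (T s)" if "s \<in> X" for s
  proof -
    obtain u c where s: "s = (u, c)" by force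
    have u: "u \<in> supp d" using that s unfolding X_def by auto
    obtain w where w: "w = other (f c u) u" by blast
    have fe: "f c u = unitv d c u + (if w = u then 0 else unitv d c w)"
      using form[OF u, of c] w by blast
    have c1: "sum_list (con s) = (if w = u then f c u + f c u else f c u)"
      unfolding s con_def w by simp
    have c2: "D s + g (T s) = unitv d c u + unitv d c w" unfolding s D_def g_def T_def w by simp
    show ?thesis unfolding c1 c2 fe
      by (cases "w = u") simp_all
  qed
  have Dg: "D s + g s = 0" for s unfolding D_def g_def unitv_def by (rule ext) auto
  have "(\<Sum>s\<in>Z. sum_list (con s)) = (\<Sum>s\<in>Z. D s) + (\<Sum>s\<in>Z. g (T s))"
  proof -
    have "(\<Sum>s\<in>Z. sum_list (con s)) = (\<Sum>s\<in>Z. D s + g (T s))"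
      by (rule sum.cong[OF refl]) (use vec Z(1) in blast)
    then show ?thesis by (simp add: sum.distrib)
  qed
  also have "(\<Sum>s\<in>Z. g (T s)) = (\<Sum>s\<in>Z. g s)"
    using sum.reindex[OF injZ, of g] Z(3) by simp
  also have "(\<Sum>s\<in>Z. D s) + (\<Sum>s\<in>Z. g s) = 0"
    using Dg by (simp add: sum.distrib[symmetric])
  finally have sum0: "(\<Sum>s\<in>Z. sum_list (con s)) = 0" .
  obtain zs where zs: "distinct zs" "set zs = Z" using finite_distinct_list[OF finZ] by blast
  define as where "as = concat (map con (filter snd zs))"
  define bs where "bs = concat (map con (filter (Not \<circ> snd) zs))"
  have "sum_list as + sum_list bs = sum_list (map (sum_list \<circ> con) zs)"
    unfolding as_def bs_def by (rule split_sum)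
  also have "\<dots> = (\<Sum>s\<in>Z. sum_list (con s))"
    using sum_list_distinct_conv_sum_set[OF zs(1), of "sum_list \<circ> con"] zs(2) by (simp add: comp_def)
  finally have S: "sum_list as + sum_list bs = 0" using sum0 by simp
  have conset: "set (con s) \<subseteq> P (snd s)" if "s \<in> Z" for s
  proof -
    have "fst s \<in> supp d" using that Z(1) unfolding X_def by auto
    hence "f (snd s) (fst s) \<in> P (snd s)" using f by blast
    then show ?thesis unfolding con_def by simp
  qed
  have A: "set as \<subseteq> PhiB B q r"
  proof
    fix x assume "x \<in> set as"
    then obtain s where s: "s \<in> Z" "snd s" "x \<in> set (con s)" unfolding as_def set_concat set_map set_filter zs(2) by blast
    then have "x \<in> P (snd s)" using conset by blast
    then show "x \<in> PhiB B q r" using s(2) unfolding P_def by simp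
  qed
  have Bs: "set bs \<subseteq> PhiB B r q"
  proof
    fix x assume "x \<in> set bs"
    then obtain s where s: "s \<in> Z" "\<not> snd s" "x \<in> set (con s)" unfolding bs_def set_concat set_map set_filter zs(2) by auto
    then have "x \<in> P (snd s)" using conset by blast
    then show "x \<in> PhiB B r q" using s(2) unfolding P_def by simp
  qed
  obtain s0 where s0: "s0 \<in> Z" using Z(2) by auto
  have Ts0: "T s0 \<in> Z" using s0 Z(3) by auto
  have "snd (T s0) = (\<not> snd s0)" unfolding T_def by simp
  have cne: "con s \<noteq> []" for s unfolding con_def by simp
  have ane: "as \<noteq> []"
  proof -
    obtain s where "s \<in> Z" "snd s"
    proof (cases "snd s0")
      case True then show ?thesis using that s0 by blast
    next
      case False then show ?thesis using that Ts0 \<open>snd (T s0) = (\<not> snd s0)\<close> by simp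
    qed
    hence "s \<in> set (filter snd zs)" unfolding set_filter zs(2) by blast
    hence "con s \<in> set (map con (filter snd zs))" unfolding set_map by (rule imageI)
    then show ?thesis unfolding as_def using cne[of s] concat_nonempty by blast
  qed
  have bne: "bs \<noteq> []"
  proof -
    obtain s where "s \<in> Z" "\<not> snd s"
    proof (cases "snd s0")
      case True then show ?thesis using that Ts0 \<open>snd (T s0) = (\<not> snd s0)\<close> by simp
    next
      case False then show ?thesis using that s0 by blast
    qed
    hence "s \<in> set (filter (Not \<circ> snd) zs)" unfolding set_filter zs(2) by simp
    hence "con s \<in> set (map con (filter (Not \<circ> snd) zs))" unfolding set_map by (rule imageI)
    then show ?thesis unfolding bs_def using cne[of s] concat_nonempty by blast
  qed
  show ?thesis
    by (rule exI[of _ as], rule exI[of _ bs], rule conjI[OF ane conjI[OF bne conjI[OF A conjI[OF Bs S]]]])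
qed

end
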